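(* Every $3$-regular graph $H$ on $n>6$ vertices satisfies $m(H)\le 4$.
   Context: All graphs are finite and simple. For graphs $G_1=(V,E_1)$, $G_2=(V,E_2)$, their symmetric difference is $(V,E_1\oplus E_2)$, where $E_1\oplus E_2$ is the set of edges in exactly one of $E_1,E_2$. A connectivity code for $H=(V,E)$ is a collection of distinct spanning subgraphs $(V,E')$, $E'\subseteq E$, such that the symmetric difference of any two distinct members is a connected graph on $V$; $m(H)$ is the maximum cardinality of a connectivity code for $H$. *)

theory Defs
  imports Main
begin

definition simple_graph :: "'a set \<Rightarrow> 'a set set \<Rightarrow> bool" where
  "simple_graph V E \<longleftrightarrow> finite V \<and> (\<forall>e\<in>E. \<exists>u v. u \<noteq> v \<and> u \<in> V \<and> v \<in> V \<and> e = {u, v})"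

definition degree :: "'a set set \<Rightarrow> 'a \<Rightarrow> nat" where
  "degree E v = card {e \<in> E. v \<in> e}"

definition regular :: "nat \<Rightarrow> 'a set \<Rightarrow> 'a set set \<Rightarrow> bool" where
  "regular k V E \<longleftrightarrow> (\<forall>v\<in>V. degree E v = k)"

definition adj_rel :: "'a set set \<Rightarrow> ('a \<times> 'a) set" where
  "adj_rel E = {(u, v). {u, v} \<in> E}"

definition connected_graph :: "'a set \<Rightarrow> 'a set set \<Rightarrow> bool" where
  "connected_graph V E \<longleftrightarrow> (\<forall>u\<in>V. \<forall>v\<in>V. (u, v) \<in> (adj_rel E)\<^sup>*)"

definition sym_diff :: "'b set \<Rightarrow> 'b set \<Rightarrow> 'b set" where
  "sym_diff A B = (A - B) \<union> (B - A)"

text \<open>A connectivity code for H = (V,E): a set of spanning subgraphs (given by their edge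
  sets E' \<subseteq> E) whose pairwise symmetric differences are connected graphs on V.\<close>
definition connectivity_code :: "'a set \<Rightarrow> 'a set set \<Rightarrow> 'a set set set \<Rightarrow> bool" where
  "connectivity_code V E C \<longleftrightarrow>
     (\<forall>F\<in>C. F \<subseteq> E) \<and>
     (\<forall>F1\<in>C. \<forall>F2\<in>C. F1 \<noteq> F2 \<longrightarrow> connected_graph V (sym_diff F1 F2))"

definition m_code :: "'a set \<Rightarrow> 'a set set \<Rightarrow> nat" where
  "m_code V E = Max {card C | C. connectivity_code V E C}"

end

theory Submission
  imports Defs
begin

lemma rtrancl_map_gen:
  assumes "(x,y) \<in> R\<^sup>*" and "\<And>a b. (a,b) \<in> R \<Longrightarrow> (f a, f b) \<in> S\<^sup>*"
  shows "(f x, f y) \<in> S\<^sup>*"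
  using assms(1)
proof (induction rule: rtrancl_induct)
  case base then show ?case by simp
next
  case (step y z) then show ?case using assms(2) rtrancl_trans by metis
qed

lemma tree_bound:
  assumes "finite V" "\<forall>e\<in>D. \<exists>u v. u\<noteq>v \<and> u\<in>V \<and> v\<in>V \<and> e={u,v}"
    "connected_graph V D"
  shows "card V \<le> card D + 1"
  using assms
proof (induction "card V" arbitrary: V D rule: less_induct)
  case less
  show ?case
  proof (cases "card V \<le> 1")
    case True then show ?thesis by simp
  next
    case False
    then have "2 \<le> card V" by simp
    then obtain u v where uv: "u \<in> V" "v \<in> V" "u \<noteq> v"
      by (metis card_2_iff' card_le_Suc_iff numeral_2_eq_2 obtain_subset_with_card_n subset_iff)
    have "(u,v) \<in> (adj_rel D)\<^sup>*" using less.prems(3) uv unfolding connected_graph_def by blast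
    then obtain w where "(u,w) \<in> adj_rel D"
      using uv(3) by (metis converse_rtranclE)
    then have abD: "{u,w} \<in> D" unfolding adj_rel_def by simp
    then obtain x y where "x\<noteq>y" "x\<in>V" "y\<in>V" "{u,w}={x,y}" using less.prems(2) by blast
    then have uw: "u \<noteq> w" "u \<in> V" "w \<in> V" by (auto simp: doubleton_eq_iff)
    define a where "a = u"
    define b where "b = w"
    define f where "f = (\<lambda>x. if x = b then a else x)"
    define V' where "V' = V - {b}"
    define D' where "D' = (\<lambda>e. f ` e) ` (D - {{a,b}})"
    have finD: "finite D"
    proof -
      have "D \<subseteq> Pow V" using less.prems(2) by auto
      then show ?thesis using less.prems(1) finite_subset by blast
    qed
    have cV': "card V' < card V" unfolding V'_def b_def using uw less.prems(1)
      by (meson card_Diff1_less)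
    have D'2: "\<forall>e\<in>D'. \<exists>u v. u\<noteq>v \<and> u\<in>V' \<and> v\<in>V' \<and> e={u,v}"
    proof
      fix e assume "e \<in> D'"
      then obtain e0 where e0: "e0 \<in> D" "e0 \<noteq> {a,b}" "e = f ` e0" unfolding D'_def by blast
      then obtain x y where xy: "x\<noteq>y" "x\<in>V" "y\<in>V" "e0={x,y}" using less.prems(2) by blast
      have "e = {f x, f y}" using xy e0 by auto
      moreover have "f x \<noteq> f y" using xy e0 unfolding f_def by (auto simp: doubleton_eq_iff)
      moreover have "f x \<in> V'" "f y \<in> V'" using xy uw unfolding f_def V'_def a_def b_def by auto
      ultimately show "\<exists>u v. u\<noteq>v \<and> u\<in>V' \<and> v\<in>V' \<and> e={u,v}" by blast
    qed
    have conn': "connected_graph V' D'"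
      unfolding connected_graph_def
    proof (intro ballI)
      fix s t assume st: "s \<in> V'" "t \<in> V'"
      then have "(s,t) \<in> (adj_rel D)\<^sup>*" using less.prems(3) unfolding connected_graph_def V'_def by blast
      then have "(f s, f t) \<in> (adj_rel D')\<^sup>*"
      proof (rule rtrancl_map_gen)
        fix p q assume "(p,q) \<in> adj_rel D"
        then have pq: "{p,q} \<in> D" unfolding adj_rel_def by simp
        show "(f p, f q) \<in> (adj_rel D')\<^sup>*"
        proof (cases "{p,q} = {a,b}")
          case True
          then have "f p = f q" unfolding f_def by (auto simp: doubleton_eq_iff)
          then show ?thesis by simp
        next
          case False
          then have "f ` {p,q} \<in> D'" unfolding D'_def using pq by blast
          then have "{f p, f q} \<in> D'" by simp
          then show ?thesis unfolding adj_rel_def by auto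
        qed
      qed
      moreover have "f s = s" "f t = t" using st unfolding f_def V'_def by auto
      ultimately show "(s,t) \<in> (adj_rel D')\<^sup>*" by simp
    qed
    have "card V' \<le> card D' + 1"
      using less.hyps[OF cV' _ D'2 conn'] less.prems(1) unfolding V'_def by simp
    moreover have "card D' \<le> card D - 1"
    proof -
      have "card D' \<le> card (D - {{a,b}})" unfolding D'_def by (rule card_image_le) (use finD in simp)
      also have "\<dots> = card D - 1" using abD finD unfolding a_def b_def by simp
      finally show ?thesis .
    qed
    moreover have "card D \<ge> 1" using abD finD by (metis One_nat_def Suc_leI card_gt_0_iff empty_iff)
    moreover have "card V' = card V - 1" unfolding V'_def using uw b_def by simp
    ultimately show ?thesis by linarith
  qed
qed

lemma cf: "finite A \<Longrightarrow> card {x\<in>A. P x} = (\<Sum>x\<in>A. if P x then 1 else (0::nat))"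
  by (simp add: sum.inter_filter[symmetric])

lemma handshake:
  assumes "simple_graph V E" "regular 3 V E"
  shows "2 * card E = 3 * card V" and "finite E"
proof -
  have fV: "finite V" using assms(1) unfolding simple_graph_def by blast
  have sub: "E \<subseteq> Pow V" using assms(1) unfolding simple_graph_def by fastforce
  show fE: "finite E" using sub fV finite_subset by blast
  have "(\<Sum>v\<in>V. degree E v) = 3 * card V" using assms(2) unfolding regular_def by simp
  moreover have "(\<Sum>v\<in>V. degree E v) = (\<Sum>v\<in>V. \<Sum>e\<in>E. if v \<in> e then 1 else 0)"
    unfolding degree_def using cf[OF fE] by simp
  moreover have "\<dots> = (\<Sum>e\<in>E. \<Sum>v\<in>V. if v \<in> e then 1 else 0)" by (rule sum.swap)
  moreover have "\<dots> = (\<Sum>e\<in>E. 2)"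
  proof (rule sum.cong)
    fix e assume "e \<in> E"
    then obtain x y where xy: "x\<noteq>y" "x\<in>V" "y\<in>V" "e={x,y}" using assms(1) unfolding simple_graph_def by blast
    have "(\<Sum>v\<in>V. if v \<in> e then 1 else 0) = card {v\<in>V. v \<in> e}" using cf[OF fV] by simp
    also have "{v\<in>V. v \<in> e} = {x,y}" using xy by auto
    finally show "(\<Sum>v\<in>V. if v \<in> e then 1 else (0::nat)) = 2" using xy by simp
  qed simp
  ultimately show "2 * card E = 3 * card V" by simp
qed

lemma symdiff_card:
  assumes "finite A" "finite B"
  shows "card (sym_diff A B) + 2 * card (A \<inter> B) = card A + card B"
proof -
  have "card (sym_diff A B) = card (A - B) + card (B - A)"
    unfolding sym_diff_def by (rule card_Un_disjoint) (use assms in auto)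
  moreover have "card A = card (A - B) + card (A \<inter> B)"
    using assms card_Int_Diff[of A B] by simp
  moreover have "card B = card (B - A) + card (A \<inter> B)"
    using assms card_Int_Diff[of B A] by (simp add: Int_commute)
  ultimately show ?thesis by simp
qed

lemma symdiff_sum:
  assumes "finite E" "A \<subseteq> E" "B \<subseteq> E"
  shows "card (sym_diff A B) = (\<Sum>e\<in>E. if (e \<in> A) \<noteq> (e \<in> B) then 1 else 0)"
proof -
  have "sym_diff A B = {e \<in> E. (e \<in> A) \<noteq> (e \<in> B)}" using assms unfolding sym_diff_def by auto
  then show ?thesis using cf[OF assms(1)] by simp
qed

lemma pair_lower:
  assumes "simple_graph V E" "A \<subseteq> E" "B \<subseteq> E" "connected_graph V (sym_diff A B)"
    "finite E" "even (card V)"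
  shows "card V \<le> card (sym_diff A B) + 1"
    and "even (card A) = even (card B) \<Longrightarrow> card V \<le> card (sym_diff A B)"
proof -
  have fV: "finite V" using assms(1) unfolding simple_graph_def by blast
  have "\<forall>e\<in>sym_diff A B. \<exists>u v. u\<noteq>v \<and> u\<in>V \<and> v\<in>V \<and> e={u,v}"
    using assms(1-3) unfolding simple_graph_def sym_diff_def by blast
  then show 1: "card V \<le> card (sym_diff A B) + 1" using tree_bound[OF fV _ assms(4)] by blast
  assume "even (card A) = even (card B)"
  moreover have "card (sym_diff A B) + 2 * card (A \<inter> B) = card A + card B"
    using symdiff_card[of A B] assms(2,3,5) finite_subset by blast
  ultimately have "even (card (sym_diff A B))"
    by (metis even_add even_mult_iff even_numeral)
  then show "card V \<le> card (sym_diff A B)" using 1 assms(6)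
    by (cases "card V = card (sym_diff A B) + 1") auto
qed

lemma bool_count:
  fixes p1 p2 p3 p4 p5 :: bool
  shows "4 \<le> (if p1 = p2 then 1 else 0) + (if p1 = p3 then 1 else 0) + (if p1 = p4 then 1 else 0)
    + (if p1 = p5 then 1 else 0) + (if p2 = p3 then 1 else 0) + (if p2 = p4 then 1 else 0)
    + (if p2 = p5 then 1 else 0) + (if p3 = p4 then 1 else 0) + (if p3 = p5 then 1 else 0)
    + (if p4 = p5 then 1 else (0::nat))"
  by (cases p1; cases p2; cases p3; cases p4; cases p5; simp)

lemma ind_le: "n \<le> d + 1 \<Longrightarrow> (P \<Longrightarrow> n \<le> d) \<Longrightarrow> n + (if P then 1 else 0) \<le> d + (1::nat)"
  by auto

lemma arith_final:
  fixes n m d12 d13 d14 d15 d23 d24 d25 d34 d35 d45 :: nat and pa pb pc pd pe :: bool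
  assumes "n > 6" "2*m = 3*n"
    "d12+d13+d14+d15+d23+d24+d25+d34+d35+d45 \<le> 6*m"
    "n \<le> d12+1" "n \<le> d13+1" "n \<le> d14+1" "n \<le> d15+1" "n \<le> d23+1"
    "n \<le> d24+1" "n \<le> d25+1" "n \<le> d34+1" "n \<le> d35+1" "n \<le> d45+1"
    "pa = pb \<Longrightarrow> n \<le> d12" "pa = pc \<Longrightarrow> n \<le> d13" "pa = pd \<Longrightarrow> n \<le> d14"
    "pa = pe \<Longrightarrow> n \<le> d15" "pb = pc \<Longrightarrow> n \<le> d23" "pb = pd \<Longrightarrow> n \<le> d24"
    "pb = pe \<Longrightarrow> n \<le> d25" "pc = pd \<Longrightarrow> n \<le> d34" "pc = pe \<Longrightarrow> n \<le> d35"
    "pd = pe \<Longrightarrow> n \<le> d45"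
  shows False
proof -
  define x12 where "x12 = (if pa = pb then 1 else (0::nat))"
  define x13 where "x13 = (if pa = pc then 1 else (0::nat))"
  define x14 where "x14 = (if pa = pd then 1 else (0::nat))"
  define x15 where "x15 = (if pa = pe then 1 else (0::nat))"
  define x23 where "x23 = (if pb = pc then 1 else (0::nat))"
  define x24 where "x24 = (if pb = pd then 1 else (0::nat))"
  define x25 where "x25 = (if pb = pe then 1 else (0::nat))"
  define x34 where "x34 = (if pc = pd then 1 else (0::nat))"
  define x35 where "x35 = (if pc = pe then 1 else (0::nat))"
  define x45 where "x45 = (if pd = pe then 1 else (0::nat))"
  have c: "4 \<le> x12+x13+x14+x15+x23+x24+x25+x34+x35+x45"
    using bool_count[of pa pb pc pd pe] unfolding x12_def x13_def x14_def x15_def x23_def x24_def x25_def x34_def x35_def x45_def by simp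
  have i12: "n + x12 \<le> d12 + 1" unfolding x12_def using ind_le[OF assms(4,14)] .
  have i13: "n + x13 \<le> d13 + 1" unfolding x13_def using ind_le[OF assms(5,15)] .
  have i14: "n + x14 \<le> d14 + 1" unfolding x14_def using ind_le[OF assms(6,16)] .
  have i15: "n + x15 \<le> d15 + 1" unfolding x15_def using ind_le[OF assms(7,17)] .
  have i23: "n + x23 \<le> d23 + 1" unfolding x23_def using ind_le[OF assms(8,18)] .
  have i24: "n + x24 \<le> d24 + 1" unfolding x24_def using ind_le[OF assms(9,19)] .
  have i25: "n + x25 \<le> d25 + 1" unfolding x25_def using ind_le[OF assms(10,20)] .
  have i34: "n + x34 \<le> d34 + 1" unfolding x34_def using ind_le[OF assms(11,21)] .
  have i35: "n + x35 \<le> d35 + 1" unfolding x35_def using ind_le[OF assms(12,22)] .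
  have i45: "n + x45 \<le> d45 + 1" unfolding x45_def using ind_le[OF assms(13,23)] .
  show False using c i12 i13 i14 i15 i23 i24 i25 i34 i35 i45 assms(1-3) by linarith
qed

lemma five_upper:
  assumes "finite E" "A\<subseteq>E" "B\<subseteq>E" "C\<subseteq>E" "D\<subseteq>E" "G\<subseteq>E"
  shows "card(sym_diff A B)+card(sym_diff A C)+card(sym_diff A D)+card(sym_diff A G)+card(sym_diff B C)
   +card(sym_diff B D)+card(sym_diff B G)+card(sym_diff C D)+card(sym_diff C G)+card(sym_diff D G) \<le> 6*card E"
proof -
  let ?i = "\<lambda>X Y e. if (e\<in>X) \<noteq> (e\<in>Y) then 1 else (0::nat)"
  have "card(sym_diff A B)+card(sym_diff A C)+card(sym_diff A D)+card(sym_diff A G)+card(sym_diff B C)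
   +card(sym_diff B D)+card(sym_diff B G)+card(sym_diff C D)+card(sym_diff C G)+card(sym_diff D G)
   = (\<Sum>e\<in>E. ?i A B e + ?i A C e + ?i A D e + ?i A G e + ?i B C e + ?i B D e + ?i B G e
        + ?i C D e + ?i C G e + ?i D G e)"
    by (simp only: symdiff_sum[OF assms(1)] assms sum.distrib)
  also have "\<dots> \<le> (\<Sum>e\<in>E. 6)" by (rule sum_mono) auto
  also have "\<dots> = 6 * card E" by simp
  finally show ?thesis .
qed


lemma code_le4:
  assumes sg: "simple_graph V E" and rg: "regular 3 V E" and n6: "card V > 6"
    and cc: "connectivity_code V E C"
  shows "card C \<le> 4"
proof (rule ccontr)
  assume "\<not> card C \<le> 4"
  then have c5: "card C \<ge> 5" by simp
  then have fC: "finite C" by (rule_tac ccontr) simp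
  have hs: "2 * card E = 3 * card V" and fE: "finite E" using handshake[OF sg rg] by auto
  have evV: "even (card V)"
  proof -
    have "even (3 * card V)" using hs[symmetric] by simp
    then show ?thesis by simp
  qed
  obtain xs where xs: "set xs = C" "distinct xs" using finite_distinct_list[OF fC] by blast
  have lx: "length xs = card C" using xs distinct_card by metis
  define F where "F i = xs ! i" for i
  have Fin: "F i \<in> C" if "i < 5" for i using that lx c5 xs(1) unfolding F_def by auto
  have Fne: "F i \<noteq> F j" if "i < 5" "j < 5" "i \<noteq> j" for i j
    using that lx c5 xs(2) unfolding F_def by (simp add: nth_eq_iff_index_eq)
  have Fsub: "F i \<subseteq> E" if "i < 5" for i using cc Fin[OF that] unfolding connectivity_code_def by simp
  have P: "card V \<le> card (sym_diff (F i) (F j)) + 1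
      \<and> (even (card (F i)) = even (card (F j)) \<longrightarrow> card V \<le> card (sym_diff (F i) (F j)))"
    if "i < 5" "j < 5" "i \<noteq> j" for i j
  proof -
    have "connected_graph V (sym_diff (F i) (F j))"
      using cc Fin[OF that(1)] Fin[OF that(2)] Fne[OF that] unfolding connectivity_code_def by simp
    then show ?thesis using pair_lower[OF sg Fsub[OF that(1)] Fsub[OF that(2)] _ fE evV] by simp
  qed
  have U: "card(sym_diff (F 0) (F 1))+card(sym_diff (F 0) (F 2))+card(sym_diff (F 0) (F 3))+card(sym_diff (F 0) (F 4))
    +card(sym_diff (F 1) (F 2))+card(sym_diff (F 1) (F 3))+card(sym_diff (F 1) (F 4))+card(sym_diff (F 2) (F 3))
    +card(sym_diff (F 2) (F 4))+card(sym_diff (F 3) (F 4)) \<le> 6*card E"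
    by (rule five_upper[OF fE]) (simp_all add: Fsub)
  note P01 = P[of 0 1] and P02 = P[of 0 2] and P03 = P[of 0 3] and P04 = P[of 0 4]
    and P12 = P[of 1 2] and P13 = P[of 1 3] and P14 = P[of 1 4]
    and P23 = P[of 2 3] and P24 = P[of 2 4] and P34 = P[of 3 4]
  show False
    apply (rule arith_final[where pa="even (card (F 0))" and pb="even (card (F 1))"
        and pc="even (card (F 2))" and pd="even (card (F 3))" and pe="even (card (F 4))", OF n6 hs U])
    using P01 P02 P03 P04 P12 P13 P14 P23 P24 P34 by simp_all
qed

theorem mainTheorem13:
  fixes V :: "'a set" and E :: "'a set set"
  assumes "simple_graph V E"
    and "regular 3 V E"
    and "card V > 6"
  shows "m_code V E \<le> 4"
proof -
  let ?S = "{card C | C. connectivity_code V E C}"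
  have "?S \<subseteq> {..4}" using code_le4[OF assms] by auto
  then have "finite ?S" using finite_subset by blast
  moreover have "?S \<noteq> {}"
  proof -
    have "connectivity_code V E {}" unfolding connectivity_code_def by simp
    then show ?thesis by blast
  qed
  ultimately show ?thesis unfolding m_code_def using code_le4[OF assms]
    by (intro Max.boundedI) auto
qed

end
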